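(* Let $w\geqslant2$, $h\geqslant1$ be integers and $\underline h=2^{\lfloor\log_2h\rfloor}$. Then $\mathrm{OR}(\mathcal{H}_{h,w})\geqslant\mathrm{OR}(\mathcal{H}_{\underline h,w})$, where $\mathcal{H}_{h,w}$ denotes the set of fast Hough transform patterns on the $h\times w$ image.
   Context: Image: for height $h$ and width $w$, the set $I$ of pixels $p_{ij}$, $i=0,\dots,h-1$ (row, from the bottom), $j=0,\dots,w-1$ (column). A pattern is a nonempty subset of $I$; a pattern set $\mathcal{T}=\{T_k\}_{k=1}^m$ is a nonempty set of distinct patterns; computing it means computing all $y_k=\sum_{p\in T_k}p$. A circuit is a directed acyclic graph with one input node of fanin zero per pixel and $m$ output nodes of fanout zero; each node of nonzero fanin (gate) computes the semigroup sum of its in-neighbours. Size = number of edges. $\mathrm{OR}(\mathcal{T})$ is the minimal size of a circuit computing $\mathcal{T}$ over $(\{0,1\},\vee)$. FHT patterns: for a pattern $T$ with exactly one pixel in each of its rows, $\Delta(T)=(j_{top}-j_{bot})\bmod w$ (column indices of topmost and bottommost pixels), $\mathit{tran}_{a,b}(T)=\{p_{i+a,\,(j+b)\bmod w}\mid p_{ij}\in T\}$. For $h=2^d$: $\mathcal{H}_0=\{\{p_{0j}\}\mid j=0,\dots,w-1\}$, $\mathcal{H}_k=\{T\cup\mathit{tran}_{2^{k-1},\,\Delta(T)+s}(T)\mid T\in\mathcal{H}_{k-1},\ s\in\{0,1\}\}$ for $k=1,\dots,d$, and $\mathcal{H}_{h,w}=\mathcal{H}_d$. For arbitrary $h$, with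 $\overline h=2^{\lceil\log_2h\rceil}$, view the $h\times w$ image $I$ as the bottom $h$ rows of the $\overline h\times w$ image and set $\mathcal{H}_{h,w}=\{T\cap I\mid T\in\mathcal{H}_{\overline h,w}\}$. *)

theory Defs
  imports Complex_Main
begin

(* Pixel p_{ij} is the pair (i,j): i = row (from the bottom), j = column. *)
type_synonym pixel = "nat \<times> nat"

definition image :: "nat \<Rightarrow> nat \<Rightarrow> pixel set" where
  "image h w = {0..<h} \<times> {0..<w}"

definition is_pattern :: "nat \<Rightarrow> nat \<Rightarrow> pixel set \<Rightarrow> bool" where
  "is_pattern h w T \<longleftrightarrow> T \<noteq> {} \<and> T \<subseteq> image h w"

definition is_pattern_set :: "nat \<Rightarrow> nat \<Rightarrow> pixel set set \<Rightarrow> bool" where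
  "is_pattern_set h w \<T> \<longleftrightarrow> \<T> \<noteq> {} \<and> finite \<T> \<and> (\<forall>T\<in>\<T>. is_pattern h w T)"

(* A circuit: finite DAG with node set V (nodes are naturals), edge set E;
   inp maps each pixel to its input node (the input nodes are exactly the nodes of fanin 0);
   out maps each pattern of the pattern set to a distinct output node of fanout 0.
   Over ({0,1},\<or>) every gate (node of nonzero fanin) computes the OR of its in-neighbours. *)
definition or_circuit_computes ::
  "nat \<Rightarrow> nat \<Rightarrow> pixel set set \<Rightarrow> nat set \<Rightarrow> (nat \<times> nat) set
     \<Rightarrow> (pixel \<Rightarrow> nat) \<Rightarrow> (pixel set \<Rightarrow> nat) \<Rightarrow> bool" where
  "or_circuit_computes h w \<T> V E inp out \<longleftrightarrow>
     finite V \<and> E \<subseteq> V \<times> V \<and> acyclic E \<and>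
     inj_on inp (image h w) \<and>
     inp ` image h w = {v \<in> V. \<forall>u. (u, v) \<notin> E} \<and>
     inj_on out \<T> \<and>
     (\<forall>T\<in>\<T>. out T \<in> V \<and> (\<forall>u. (out T, u) \<notin> E)) \<and>
     (\<forall>(x :: pixel \<Rightarrow> bool) (val :: nat \<Rightarrow> bool).
        ((\<forall>p\<in>image h w. val (inp p) = x p) \<and>
         (\<forall>v\<in>V. (\<exists>u. (u, v) \<in> E) \<longrightarrow> val v = (\<exists>u. (u, v) \<in> E \<and> val u)))
        \<longrightarrow> (\<forall>T\<in>\<T>. val (out T) = (\<exists>p\<in>T. x p)))"

definition OR_complexity :: "nat \<Rightarrow> nat \<Rightarrow> pixel set set \<Rightarrow> nat" where
  "OR_complexity h w \<T> =
     (LEAST n. \<exists>V E inp out. or_circuit_computes h w \<T> V E inp out \<and> card E = n)"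

definition col_at :: "pixel set \<Rightarrow> nat \<Rightarrow> nat" where
  "col_at T i = (THE j. (i, j) \<in> T)"

definition Delta :: "nat \<Rightarrow> pixel set \<Rightarrow> nat" where
  "Delta w T = nat ((int (col_at T (Max (fst ` T))) - int (col_at T (Min (fst ` T)))) mod int w)"

definition tran :: "nat \<Rightarrow> nat \<Rightarrow> nat \<Rightarrow> pixel set \<Rightarrow> pixel set" where
  "tran w a b T = {(i + a, (j + b) mod w) | i j. (i, j) \<in> T}"

fun FHT_pow :: "nat \<Rightarrow> nat \<Rightarrow> pixel set set" where
  "FHT_pow w 0 = {{(0, j)} | j. j < w}"
| "FHT_pow w (Suc k) =
     {T \<union> tran w (2 ^ k) (Delta w T + s) T | T s. T \<in> FHT_pow w k \<and> s \<in> {0, 1}}"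

definition FHT :: "nat \<Rightarrow> nat \<Rightarrow> pixel set set" where
  "FHT h w = {T \<inter> image h w | T. T \<in> FHT_pow w (nat \<lceil>log 2 (real h)\<rceil>)}"

end

theory Submission
  imports Defs
begin

lemma FHT_pow_sub: "w > 0 \<Longrightarrow> T \<in> FHT_pow w k \<Longrightarrow> T \<subseteq> image (2^k) w"
proof (induction k arbitrary: T)
  case 0
  then show ?case by (auto simp: image_def)
next
  case (Suc k)
  then obtain T0 s where T: "T = T0 \<union> tran w (2 ^ k) (Delta w T0 + s) T0" and T0: "T0 \<in> FHT_pow w k"
    by auto
  have sub: "T0 \<subseteq> image (2^k) w" using Suc T0 by blast
  show ?case
  proof
    fix p assume "p \<in> T"
    then have "p \<in> T0 \<or> p \<in> tran w (2 ^ k) (Delta w T0 + s) T0" using T by simp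
    then show "p \<in> image (2^Suc k) w"
    proof
      assume "p \<in> T0" then show ?thesis using sub by (auto simp: image_def)
    next
      assume "p \<in> tran w (2 ^ k) (Delta w T0 + s) T0"
      then obtain i j where p: "p = (i + 2^k, (j + (Delta w T0 + s)) mod w)" and ij: "(i,j) \<in> T0"
        unfolding tran_def by blast
      have "i < 2^k" using ij sub by (auto simp: image_def)
      then show ?thesis using p Suc.prems(1) by (auto simp: image_def)
    qed
  qed
qed

lemma FHT_pow_row0: "T \<in> FHT_pow w k \<Longrightarrow> \<exists>j<w. (0,j) \<in> T"
proof (induction k arbitrary: T)
  case 0
  then show ?case by auto
next
  case (Suc k)
  then obtain T0 s where T: "T = T0 \<union> tran w (2 ^ k) (Delta w T0 + s) T0" and T0: "T0 \<in> FHT_pow w k"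
    by auto
  then show ?case using Suc.IH[OF T0] by auto
qed

lemma FHT_pow_ext:
  assumes "T \<in> FHT_pow w k" "k \<le> m"
  shows "\<exists>T2 \<in> FHT_pow w m. T2 \<inter> image (2^k) w = T \<inter> image (2^k) w"
  using assms(2)
proof (induction m rule: dec_induct)
  case base
  then show ?case using assms(1) by blast
next
  case (step m)
  then obtain T2 where T2: "T2 \<in> FHT_pow w m" "T2 \<inter> image (2^k) w = T \<inter> image (2^k) w" by blast
  define T3 where "T3 = T2 \<union> tran w (2 ^ m) (Delta w T2 + 0) T2"
  have "T3 \<in> FHT_pow w (Suc m)" unfolding T3_def using T2(1)
    apply simp apply (rule exI[of _ T2]) apply (rule exI[of _ 0]) by simp
  moreover have "tran w (2 ^ m) (Delta w T2 + 0) T2 \<inter> image (2^k) w = {}"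
  proof -
    have "(2::nat)^k \<le> 2^m" using step(1) by (simp add: power_increasing)
    then have "\<forall>i. \<not> i + 2^m < (2::nat)^k" by linarith
    then show ?thesis unfolding tran_def image_def by auto
  qed
  then have "T3 \<inter> image (2^k) w = T \<inter> image (2^k) w" using T2(2) unfolding T3_def by blast
  ultimately show ?case by blast
qed

lemma circuit_exists:
  assumes fin: "finite \<T>" and ne: "\<forall>T\<in>\<T>. T \<noteq> {} \<and> T \<subseteq> image h w"
  shows "\<exists>V E inp out. or_circuit_computes h w \<T> V E inp out"
proof -
  have "finite (image h w)" by (simp add: image_def)
  then obtain g :: "pixel \<Rightarrow> nat" and n where g: "inj_on g (image h w)"
    using finite_imp_inj_to_nat_seg by blast
  obtain f :: "pixel set \<Rightarrow> nat" and n2 where f: "inj_on f \<T>"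
    using finite_imp_inj_to_nat_seg[OF fin] by blast
  define inp where "inp p = 2 * g p" for p
  define out where "out T = 2 * f T + 1" for T
  define V where "V = inp ` image h w \<union> out ` \<T>"
  define E where "E = {(inp p, out T) | p T. T \<in> \<T> \<and> p \<in> T}"
  have Eeo: "(u,v) \<in> E \<Longrightarrow> even u \<and> odd v" for u v unfolding E_def inp_def out_def by auto
  have trE: "trans E" unfolding trans_def using Eeo by blast
  have acyc: "acyclic E" unfolding acyclic_def using trancl_id[OF trE] Eeo by auto
  have injinp: "inj_on inp (image h w)" using g unfolding inp_def inj_on_def by auto
  have injout: "inj_on out \<T>" using f unfolding out_def inj_on_def by auto
  have outE: "(u, out T) \<in> E \<longleftrightarrow> (\<exists>p\<in>T. u = inp p)" if "T \<in> \<T>" for u T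
  proof
    assume "(u, out T) \<in> E"
    then obtain p T' where "u = inp p" "out T = out T'" "T' \<in> \<T>" "p \<in> T'" unfolding E_def by auto
    then show "\<exists>p\<in>T. u = inp p" using injout that unfolding inj_on_def by metis
  next
    assume "\<exists>p\<in>T. u = inp p" then show "(u, out T) \<in> E" unfolding E_def using that by auto
  qed
  have "or_circuit_computes h w \<T> V E inp out"
    unfolding or_circuit_computes_def
  proof (intro conjI)
    show "finite V" unfolding V_def using fin \<open>finite (image h w)\<close> by simp
    show "E \<subseteq> V \<times> V" unfolding E_def V_def using ne by auto
    show "acyclic E" by (rule acyc)
    show "inj_on inp (image h w)" by (rule injinp)
    show "inp ` image h w = {v \<in> V. \<forall>u. (u, v) \<notin> E}"
    proof
      show "inp ` image h w \<subseteq> {v \<in> V. \<forall>u. (u, v) \<notin> E}"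
        unfolding V_def using Eeo unfolding inp_def by fastforce
      show "{v \<in> V. \<forall>u. (u, v) \<notin> E} \<subseteq> inp ` image h w"
      proof
        fix v assume v: "v \<in> {v \<in> V. \<forall>u. (u, v) \<notin> E}"
        show "v \<in> inp ` image h w"
        proof (rule ccontr)
          assume "v \<notin> inp ` image h w"
          then obtain T where T: "T \<in> \<T>" "v = out T" using v unfolding V_def by auto
          then obtain p where "p \<in> T" using ne by blast
          then show False using outE[OF T(1)] T v by blast
        qed
      qed
    qed
    show "inj_on out \<T>" by (rule injout)
    show "\<forall>T\<in>\<T>. out T \<in> V \<and> (\<forall>u. (out T, u) \<notin> E)"
      unfolding V_def using Eeo unfolding out_def by fastforce
    show "\<forall>x val. (\<forall>p\<in>image h w. val (inp p) = x p) \<and>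
        (\<forall>v\<in>V. (\<exists>u. (u, v) \<in> E) \<longrightarrow> val v = (\<exists>u. (u, v) \<in> E \<and> val u)) \<longrightarrow>
        (\<forall>T\<in>\<T>. val (out T) = (\<exists>p\<in>T. x p))"
    proof (intro allI impI ballI)
      fix x val T
      assume H: "(\<forall>p\<in>image h w. val (inp p) = x p) \<and>
        (\<forall>v\<in>V. (\<exists>u. (u, v) \<in> E) \<longrightarrow> val v = (\<exists>u. (u, v) \<in> E \<and> val u))"
        and T: "T \<in> \<T>"
      obtain p0 where "p0 \<in> T" using ne T by blast
      then have "\<exists>u. (u, out T) \<in> E" using outE[OF T] by blast
      moreover have "out T \<in> V" using T unfolding V_def by auto
      ultimately have "val (out T) = (\<exists>u. (u, out T) \<in> E \<and> val u)" using H by blast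
      also have "\<dots> = (\<exists>p\<in>T. val (inp p))" using outE[OF T] by auto
      also have "\<dots> = (\<exists>p\<in>T. x p)" using H ne T by blast
      finally show "val (out T) = (\<exists>p\<in>T. x p)" .
    qed
  qed
  then show ?thesis by blast
qed

lemma aux_sup:
  assumes "v \<in> V'" "\<forall>u. (u,v) \<notin> E" "v \<in> V" "inp ` A = {v\<in>V. \<forall>u. (u,v)\<notin>E}"
    "\<And>p. p\<in>A \<Longrightarrow> inp p \<in> V' \<longleftrightarrow> p \<in> B"
  shows "v \<in> inp ` B"
proof -
  have "v \<in> inp ` A" using assms(2,3,4) by simp
  then obtain p where p: "p \<in> A" "v = inp p" by auto
  then have "p \<in> B" using assms(1,5) by simp
  then show ?thesis using p(2) by simp
qed

lemma circuit_restrict: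
  assumes C: "or_circuit_computes h w \<T> V E inp out"
    and sub: "image h' w \<subseteq> image h w"
    and T': "\<forall>T'\<in>\<T>'. T' \<noteq> {} \<and> (\<exists>T\<in>\<T>. T \<inter> image h' w = T')"
  shows "\<exists>V' E' inp' out'. or_circuit_computes h' w \<T>' V' E' inp' out' \<and> card E' \<le> card E"
proof -
  note C' = C[unfolded or_circuit_computes_def]
  have finV: "finite V" using C' by (elim conjE) assumption
  have EV: "E \<subseteq> V \<times> V" using C' by (elim conjE) assumption
  have acyc: "acyclic E" using C' by (elim conjE) assumption
  have injinp: "inj_on inp (image h w)" using C' by (elim conjE) assumption
  have inpV: "inp ` image h w = {v \<in> V. \<forall>u. (u, v) \<notin> E}" using C' by (elim conjE) assumption
  have injout: "inj_on out \<T>" using C' by (elim conjE) assumption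
  have outV: "\<forall>T\<in>\<T>. out T \<in> V \<and> (\<forall>u. (out T, u) \<notin> E)" using C' by (elim conjE) assumption
  have semA: "\<forall>(x :: pixel \<Rightarrow> bool) (val :: nat \<Rightarrow> bool). (\<forall>p\<in>image h w. val (inp p) = x p) \<and>
         (\<forall>v\<in>V. (\<exists>u. (u, v) \<in> E) \<longrightarrow> val v = (\<exists>u. (u, v) \<in> E \<and> val u))
        \<longrightarrow> (\<forall>T\<in>\<T>. val (out T) = (\<exists>p\<in>T. x p))" using C' by (elim conjE) assumption
  have sem: "\<And>x val. (\<forall>p\<in>image h w. val (inp p) = x p) \<Longrightarrow>
         (\<forall>v\<in>V. (\<exists>u. (u, v) \<in> E) \<longrightarrow> val v = (\<exists>u. (u, v) \<in> E \<and> val u))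
        \<Longrightarrow> (\<forall>T\<in>\<T>. val (out T) = (\<exists>p\<in>T. x p))"
    using semA by blast
  define S where "S = inp ` image h' w"
  define V' where "V' = {v \<in> V. \<exists>s\<in>S. (s, v) \<in> E\<^sup>*}"
  define E' where "E' = E \<inter> (V' \<times> V')"
  define sel where "sel T' = (SOME T. T \<in> \<T> \<and> T \<inter> image h' w = T')" for T'
  define out' where "out' T' = out (sel T')" for T'
  have sel: "sel T' \<in> \<T> \<and> sel T' \<inter> image h' w = T'" if "T' \<in> \<T>'" for T'
  proof -
    have "\<exists>T. T \<in> \<T> \<and> T \<inter> image h' w = T'" using T' that by blast
    then show ?thesis unfolding sel_def by (rule someI_ex)
  qed
  have SV: "S \<subseteq> V" unfolding S_def using sub inpV by blast
  have Snopred: "(u, s) \<notin> E" if "s \<in> S" for u s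
    using that sub inpV unfolding S_def by blast
  have reachS: "(s, v) \<in> E\<^sup>* \<Longrightarrow> s \<in> S \<Longrightarrow> (u, s) \<in> E \<Longrightarrow> False" for s v u
    using Snopred by blast
  have predV': "\<exists>u\<in>V'. (u, v) \<in> E" if th: "v \<in> V'" "(u0, v) \<in> E" for v u0
  proof -
    obtain s where s: "s \<in> S" "(s, v) \<in> E\<^sup>*" using th(1) unfolding V'_def by blast
    have "v \<noteq> s" using Snopred[OF s(1)] th(2) by blast
    then obtain u where u: "(s, u) \<in> E\<^sup>*" "(u, v) \<in> E" using s(2) by (metis rtranclE)
    then have "u \<in> V" using EV by blast
    then show ?thesis using u s(1) unfolding V'_def by blast
  qed
  have closed: "v \<in> V'" if th: "u \<in> V'" "(u, v) \<in> E" for u v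
  proof -
    obtain s where s: "s \<in> S" "(s, u) \<in> E\<^sup>*" using th(1) unfolding V'_def by blast
    then have "(s, v) \<in> E\<^sup>*" using th(2) by (meson rtrancl.rtrancl_into_rtrancl)
    moreover have "v \<in> V" using th(2) EV by blast
    ultimately show ?thesis using s(1) unfolding V'_def by blast
  qed
  have inpV': "inp p \<in> V' \<longleftrightarrow> p \<in> image h' w" if "p \<in> image h w" for p
  proof
    assume "inp p \<in> V'"
    then obtain s where s: "s \<in> S" "(s, inp p) \<in> E\<^sup>*" unfolding V'_def by auto
    have "inp p \<in> inp ` image h w" using that by (rule imageI)
    then have "inp p \<in> {v \<in> V. \<forall>u. (u, v) \<notin> E}" using inpV by simp
    then have nop: "\<forall>u. (u, inp p) \<notin> E" by simp
    have "s = inp p" using s(2)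
    proof (cases rule: rtranclE)
      case (step y) then show ?thesis using nop by simp
    qed simp
    then obtain q where q: "q \<in> image h' w" "inp q = inp p" using s(1) unfolding S_def by auto
    have "q \<in> image h w" using q(1) sub by (rule subsetD[rotated])
    then have "q = p" using inj_onD[OF injinp q(2)] that by simp
    then show "p \<in> image h' w" using q(1) by simp
  next
    assume "p \<in> image h' w"
    then have "inp p \<in> S" unfolding S_def by (rule imageI)
    moreover have "(inp p, inp p) \<in> E\<^sup>*" by simp
    ultimately show "inp p \<in> V'" unfolding V'_def using SV by blast
  qed
  have outreach: "out T \<in> V'" if "T \<in> \<T>" "T \<inter> image h' w \<noteq> {}" for T
  proof -
    define val where "val v = (v \<in> V')" for v
    define x where "x p = (p \<in> image h' w)" for p
    have "\<forall>T\<in>\<T>. val (out T) = (\<exists>p\<in>T. x p)"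
    proof (rule sem)
      show "\<forall>p\<in>image h w. val (inp p) = x p" using inpV' unfolding val_def x_def by blast
      show "\<forall>v\<in>V. (\<exists>u. (u, v) \<in> E) \<longrightarrow> val v = (\<exists>u. (u, v) \<in> E \<and> val u)"
        unfolding val_def using predV' closed by blast
    qed
    then show ?thesis using that unfolding val_def x_def by blast
  qed
  have circ: "or_circuit_computes h' w \<T>' V' E' inp out'"
    unfolding or_circuit_computes_def
  proof (intro conjI)
    show "finite V'" unfolding V'_def using finV by simp
    show "E' \<subseteq> V' \<times> V'" unfolding E'_def by blast
    show "acyclic E'" unfolding E'_def using acyc acyclic_subset by blast
    show "inj_on inp (image h' w)" using injinp sub inj_on_subset by blast
    show "inp ` image h' w = {v \<in> V'. \<forall>u. (u, v) \<notin> E'}"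
    proof
      show "inp ` image h' w \<subseteq> {v \<in> V'. \<forall>u. (u, v) \<notin> E'}"
      proof
        fix v assume "v \<in> inp ` image h' w"
        then obtain p where p: "p \<in> image h' w" "v = inp p" by auto
        have "p \<in> image h w" using p(1) sub by (rule subsetD[rotated])
        then have "inp p \<in> V'" using inpV' p(1) by simp
        moreover have "inp p \<in> S" unfolding S_def using p(1) by (rule imageI)
        then have "\<forall>u. (u, inp p) \<notin> E'" using Snopred unfolding E'_def by simp
        ultimately show "v \<in> {v \<in> V'. \<forall>u. (u, v) \<notin> E'}" using p(2) by simp
      qed
      show "{v \<in> V'. \<forall>u. (u, v) \<notin> E'} \<subseteq> inp ` image h' w"
      proof
        fix v assume v: "v \<in> {v \<in> V'. \<forall>u. (u, v) \<notin> E'}"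
        then have vV': "v \<in> V'" and noE': "\<forall>u. (u, v) \<notin> E'" by simp_all
        have noE: "\<forall>u. (u, v) \<notin> E"
        proof (intro allI notI)
          fix u assume "(u, v) \<in> E"
          from predV'[OF vV' this] obtain u' where "u' \<in> V'" "(u', v) \<in> E" by blast
          then have "(u', v) \<in> E'" using vV' unfolding E'_def by simp
          then show False using noE' by simp
        qed
        have "v \<in> V" using vV' unfolding V'_def by simp
        show "v \<in> inp ` image h' w" by (rule aux_sup[OF vV' noE \<open>v \<in> V\<close> inpV inpV'])
      qed
    qed
    show "inj_on out' \<T>'"
    proof (rule inj_onI)
      fix a b assume ab: "a \<in> \<T>'" "b \<in> \<T>'" "out' a = out' b"
      have s1: "sel a \<in> \<T>" "sel a \<inter> image h' w = a" using sel[OF ab(1)] by simp_all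
      have s2: "sel b \<in> \<T>" "sel b \<inter> image h' w = b" using sel[OF ab(2)] by simp_all
      have "out (sel a) = out (sel b)" using ab(3) unfolding out'_def .
      then have "sel a = sel b" by (rule inj_onD[OF injout _ s1(1) s2(1)])
      then show "a = b" using s1(2) s2(2) by metis
    qed
    show "\<forall>T\<in>\<T>'. out' T \<in> V' \<and> (\<forall>u. (out' T, u) \<notin> E')"
    proof
      fix T assume T: "T \<in> \<T>'"
      have s1: "sel T \<in> \<T>" "sel T \<inter> image h' w = T" using sel[OF T] by simp_all
      have "T \<noteq> {}" using T' T by simp
      then have "out (sel T) \<in> V'" using outreach[OF s1(1)] s1(2) by simp
      then show "out' T \<in> V' \<and> (\<forall>u. (out' T, u) \<notin> E')"
        using outV sel[OF T] unfolding out'_def E'_def by blast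
    qed
    show "\<forall>x val. (\<forall>p\<in>image h' w. val (inp p) = x p) \<and>
        (\<forall>v\<in>V'. (\<exists>u. (u, v) \<in> E') \<longrightarrow> val v = (\<exists>u. (u, v) \<in> E' \<and> val u)) \<longrightarrow>
        (\<forall>T\<in>\<T>'. val (out' T) = (\<exists>p\<in>T. x p))"
    proof (intro allI impI ballI)
      fix x' val' T
      assume H: "(\<forall>p\<in>image h' w. val' (inp p) = x' p) \<and>
        (\<forall>v\<in>V'. (\<exists>u. (u, v) \<in> E') \<longrightarrow> val' v = (\<exists>u. (u, v) \<in> E' \<and> val' u))"
        and T: "T \<in> \<T>'"
      define x where "x p = (p \<in> image h' w \<and> x' p)" for p
      define val where "val v = (v \<in> V' \<and> val' v)" for v
      have all: "\<forall>T\<in>\<T>. val (out T) = (\<exists>p\<in>T. x p)"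
      proof (rule sem)
        show "\<forall>p\<in>image h w. val (inp p) = x p"
          using inpV' H unfolding val_def x_def by blast
        show "\<forall>v\<in>V. (\<exists>u. (u, v) \<in> E) \<longrightarrow> val v = (\<exists>u. (u, v) \<in> E \<and> val u)"
        proof (intro ballI impI)
          fix v assume v: "v \<in> V" "\<exists>u. (u, v) \<in> E"
          show "val v = (\<exists>u. (u, v) \<in> E \<and> val u)"
          proof (cases "v \<in> V'")
            case True
            then have "\<exists>u. (u, v) \<in> E'" using predV' v(2) unfolding E'_def by blast
            then have "val' v = (\<exists>u. (u, v) \<in> E' \<and> val' u)" using H True by blast
            then show ?thesis using True unfolding val_def E'_def by blast
          next
            case False
            then show ?thesis using closed unfolding val_def by blast
          qed
        qed
      qed
      have sT: "sel T \<in> \<T>" "sel T \<inter> image h' w = T" using sel[OF T] by simp_all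
      have "T \<noteq> {}" using T' T by simp
      then have "out (sel T) \<in> V'" using outreach[OF sT(1)] sT(2) by simp
      then have "val' (out' T) = val (out (sel T))" unfolding val_def out'_def by simp
      also have "\<dots> = (\<exists>p\<in>sel T. x p)" using all sT by blast
      also have "\<dots> = (\<exists>p\<in>sel T \<inter> image h' w. x' p)" unfolding x_def by auto
      also have "\<dots> = (\<exists>p\<in>T. x' p)" using sT(2) by simp
      finally show "val' (out' T) = (\<exists>p\<in>T. x' p)" .
    qed
  qed
  moreover have "card E' \<le> card E"
  proof -
    have "finite E" using EV finV by (meson finite_SigmaI finite_subset)
    then show ?thesis unfolding E'_def by (simp add: card_mono)
  qed
  ultimately show ?thesis by blast
qed


lemma image_mono_h: "a \<le> b \<Longrightarrow> image a w \<subseteq> image b w"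
  unfolding image_def by auto

theorem proposition9:
  fixes h w :: nat
  assumes "w \<ge> 2" and "h \<ge> 1"
  shows "OR_complexity h w (FHT h w)
           \<ge> OR_complexity (2 ^ nat \<lfloor>log 2 (real h)\<rfloor>) w (FHT (2 ^ nat \<lfloor>log 2 (real h)\<rfloor>) w)"
proof -
  define k where "k = nat \<lfloor>log 2 (real h)\<rfloor>"
  define K where "K = nat \<lceil>log 2 (real h)\<rceil>"
  define hl where "hl = (2::nat) ^ k"
  have w0: "w > 0" using assms by simp
  have lg0: "log 2 (real h) \<ge> 0" using assms by simp
  have rk: "real k \<le> log 2 (real h)" unfolding k_def using lg0 by linarith
  have "(2::real) powr real k \<le> 2 powr log 2 (real h)" using rk by (rule powr_mono) simp
  also have "\<dots> = real h" using assms by simp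
  finally have "real hl \<le> real h" unfolding hl_def by (simp add: powr_realpow)
  then have hlh: "hl \<le> h" by simp
  have hl1: "hl \<ge> 1" unfolding hl_def by simp
  have kK: "k \<le> K" unfolding k_def K_def by (simp add: nat_mono floor_le_ceiling)
  have "log 2 (real hl) = real k" unfolding hl_def by (simp add: log_pow_cancel)
  then have Khl: "nat \<lceil>log 2 (real hl)\<rceil> = k" by simp
  have FHThl: "FHT hl w = {T \<inter> image hl w | T. T \<in> FHT_pow w k}"
    unfolding FHT_def Khl ..
  have FHTh: "FHT h w = {T \<inter> image h w | T. T \<in> FHT_pow w K}"
    unfolding FHT_def K_def ..
  have subim: "image hl w \<subseteq> image h w" using hlh by (rule image_mono_h)
  have finF: "finite (FHT h w)"
  proof (rule finite_subset)
    show "FHT h w \<subseteq> Pow (image h w)" unfolding FHTh by blast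
    show "finite (Pow (image h w))" by (simp add: image_def)
  qed
  have neF: "\<forall>T\<in>FHT h w. T \<noteq> {} \<and> T \<subseteq> image h w"
  proof
    fix T assume "T \<in> FHT h w"
    then obtain T0 where T0: "T0 \<in> FHT_pow w K" "T = T0 \<inter> image h w" unfolding FHTh by blast
    obtain j where "j < w" "(0, j) \<in> T0" using FHT_pow_row0[OF T0(1)] by blast
    then have "(0, j) \<in> T" using T0(2) assms(2) by (simp add: image_def)
    then show "T \<noteq> {} \<and> T \<subseteq> image h w" using T0(2) by blast
  qed
  define P where "P n = (\<exists>V E inp out. or_circuit_computes h w (FHT h w) V E inp out \<and> card E = n)" for n
  have "\<exists>n. P n" unfolding P_def using circuit_exists[OF finF neF] by blast
  then have "P (LEAST n. P n)" by (rule LeastI_ex)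
  then obtain V E inp out where C: "or_circuit_computes h w (FHT h w) V E inp out"
    and cE: "card E = (LEAST n. P n)" unfolding P_def by blast
  have OReq: "OR_complexity h w (FHT h w) = (LEAST n. P n)"
    unfolding OR_complexity_def P_def ..
  have T'c: "\<forall>T'\<in>FHT hl w. T' \<noteq> {} \<and> (\<exists>T\<in>FHT h w. T \<inter> image hl w = T')"
  proof
    fix T' assume "T' \<in> FHT hl w"
    then obtain T where T: "T \<in> FHT_pow w k" "T' = T \<inter> image hl w" unfolding FHThl by blast
    obtain j where "j < w" "(0, j) \<in> T" using FHT_pow_row0[OF T(1)] by blast
    then have "(0, j) \<in> T'" using T(2) hl1 by (simp add: image_def)
    then have ne: "T' \<noteq> {}" by blast
    obtain T2 where T2: "T2 \<in> FHT_pow w K" "T2 \<inter> image (2^k) w = T \<inter> image (2^k) w"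
      using FHT_pow_ext[OF T(1) kK] by blast
    have "T2 \<inter> image h w \<in> FHT h w" unfolding FHTh using T2(1) by blast
    moreover have "(T2 \<inter> image h w) \<inter> image hl w = T'"
      using T2(2) T(2) subim unfolding hl_def by blast
    ultimately show "T' \<noteq> {} \<and> (\<exists>T\<in>FHT h w. T \<inter> image hl w = T')" using ne by blast
  qed
  obtain V' E' inp' out' where C': "or_circuit_computes hl w (FHT hl w) V' E' inp' out'"
    and cE': "card E' \<le> card E"
    using circuit_restrict[OF C subim T'c] by blast
  have "OR_complexity hl w (FHT hl w) \<le> card E'"
    unfolding OR_complexity_def using C' by (intro Least_le) blast
  then have "OR_complexity hl w (FHT hl w) \<le> OR_complexity h w (FHT h w)"
    using cE' cE OReq by simp
  then show ?thesis unfolding hl_def k_def .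
qed

end
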